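(* Let $V, K$ be positive integers and let $\mathbf{p}_1,\dots,\mathbf{p}_K \in [0,1]^V$ be vectors with entries $p_{ij}$. Define $p_i^{\mathrm{OPT}} = \prod_{j=1}^K p_{ij}$ for $i=1,\dots,V$ and $\mathrm{OPT} = \sum_{i=1}^V p_i^{\mathrm{OPT}}$. Then for every $\mathbf{b} \in [0,1]^V$ there exists $j \in \{1,\dots,K\}$ such that $$\sum_{i=1}^V p_{ij} b_i \;\le\; \Big(1-\frac{1}{K}\Big)\sum_{i=1}^V b_i + \frac{\mathrm{OPT}}{K}.$$
   Context: In the paper, $i$ indexes voxels of a map, $j$ indexes depth-measuring rays, $p_{ij}\in[0,1]$ is the (estimated) probability that voxel $i$ is not covered by ray $j$, and $\mathbf b$ is a vector of current per-voxel losses. *)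

theory Defs
  imports Main Complex_Main
begin

definition p_opt :: "nat \<Rightarrow> (nat \<Rightarrow> nat \<Rightarrow> real) \<Rightarrow> nat \<Rightarrow> real" where
  "p_opt K p i = (\<Prod>j=1..K. p i j)"

definition OPT :: "nat \<Rightarrow> nat \<Rightarrow> (nat \<Rightarrow> nat \<Rightarrow> real) \<Rightarrow> real" where
  "OPT V K p = (\<Sum>i=1..V. p_opt K p i)"

end

theory Submission
  imports Defs
begin

lemma sum_prod_bound:
  fixes f :: "nat \<Rightarrow> real"
  assumes "finite A" "\<And>x. x \<in> A \<Longrightarrow> 0 \<le> f x \<and> f x \<le> 1"
  shows "sum f A + 1 \<le> real (card A) + prod f A"
  using assms
proof (induction A rule: finite_induct)
  case empty
  then show ?case by simp
next
  case (insert x A)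
  have IH: "sum f A + 1 \<le> real (card A) + prod f A" using insert by auto
  have fx: "0 \<le> f x" "f x \<le> 1" using insert by auto
  have P: "0 \<le> prod f A" "prod f A \<le> 1"
    using insert by (auto intro: prod_nonneg prod_le_1)
  have "(1 - f x) * (1 - prod f A) \<ge> 0" using fx P by simp
  then show ?case using insert IH by (simp add: algebra_simps)
qed

theorem lemma1:
  fixes V K :: nat and p :: "nat \<Rightarrow> nat \<Rightarrow> real" and b :: "nat \<Rightarrow> real"
  assumes "V > 0" and "K > 0"
    and "\<And>i j. i \<in> {1..V} \<Longrightarrow> j \<in> {1..K} \<Longrightarrow> 0 \<le> p i j \<and> p i j \<le> 1"
    and "\<And>i. i \<in> {1..V} \<Longrightarrow> 0 \<le> b i \<and> b i \<le> 1"
  shows "\<exists>j \<in> {1..K}. (\<Sum>i=1..V. p i j * b i)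
           \<le> (1 - 1 / real K) * (\<Sum>i=1..V. b i) + OPT V K p / real K"
proof (rule ccontr)
  let ?R = "(1 - 1 / real K) * (\<Sum>i=1..V. b i) + OPT V K p / real K"
  assume "\<not> ?thesis"
  hence lt: "\<And>j. j \<in> {1..K} \<Longrightarrow> ?R < (\<Sum>i=1..V. p i j * b i)" by force
  have Kp: "real K > 0" using assms(2) by simp
  have "(\<Sum>j=1..K. ?R) < (\<Sum>j=1..K. \<Sum>i=1..V. p i j * b i)"
    using assms(2) lt by (intro sum_strict_mono) auto
  hence A: "real K * ?R < (\<Sum>i=1..V. b i * (\<Sum>j=1..K. p i j))"
  proof -
    have "(\<Sum>j=1..K. \<Sum>i=1..V. p i j * b i) = (\<Sum>i=1..V. \<Sum>j=1..K. p i j * b i)"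
      by (rule sum.swap)
    also have "\<dots> = (\<Sum>i=1..V. b i * (\<Sum>j=1..K. p i j))"
      by (simp add: sum_distrib_left mult.commute)
    finally show ?thesis using \<open>(\<Sum>j=1..K. ?R) < _\<close> by simp
  qed
  have eqR: "real K * ?R = (real K - 1) * (\<Sum>i=1..V. b i) + OPT V K p"
    using Kp by (simp add: field_simps)
  have B: "b i * (\<Sum>j=1..K. p i j) \<le> (real K - 1) * b i + p_opt K p i" if i: "i \<in> {1..V}" for i
  proof -
    have s: "(\<Sum>j=1..K. p i j) + 1 \<le> real K + p_opt K p i"
      using sum_prod_bound[of "{1..K}" "p i"] assms(3)[OF i] by (simp add: p_opt_def)
    have bi: "0 \<le> b i" "b i \<le> 1" using assms(4)[OF i] by auto
    have po: "0 \<le> p_opt K p i" unfolding p_opt_def using assms(3)[OF i] by (auto intro: prod_nonneg)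
    have "b i * (\<Sum>j=1..K. p i j) \<le> b i * (real K - 1 + p_opt K p i)"
      using s bi by (intro mult_left_mono) auto
    also have "\<dots> = (real K - 1) * b i + b i * p_opt K p i" by (simp add: algebra_simps)
    also have "\<dots> \<le> (real K - 1) * b i + p_opt K p i"
      using bi po mult_left_le_one_le[of "p_opt K p i" "b i"] by (simp add: mult.commute)
    finally show ?thesis .
  qed
  have "(\<Sum>i=1..V. b i * (\<Sum>j=1..K. p i j)) \<le> (\<Sum>i=1..V. (real K - 1) * b i + p_opt K p i)"
    by (rule sum_mono) (rule B)
  also have "\<dots> = (real K - 1) * (\<Sum>i=1..V. b i) + OPT V K p"
    by (simp add: sum.distrib sum_distrib_left OPT_def)
  finally show False using A eqR by linarith
qed

end
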